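(* Assume Setup (S) and the completion data (C). Then for every $n\ge 1$, $\Phi_n$ maps $\mathbb{Z}^{n+1}$ injectively into $C(X_{min},G)$, and $\Phi_{n+1}\circ\phi_{n*}=\Phi_n$, where $\phi_{n*}:\mathbb{Z}^{n+1}\to\mathbb{Z}^{n+2}$ is multiplication by $\overline{A}_{n,n+1}$. Consequently there is an injective group homomorphism $\Psi:K_0(\mathfrak{A})=\varinjlim(\mathbb{Z}^{n+1},\phi_{n*})\to C(X_{min},G)$ with $\Psi\circ\iota_n=\Phi_n$ ($\iota_n$ the canonical maps into the limit), and $\Psi$ sends the order unit $[1_{\mathfrak{A}}]$ to $\chi_{X_{min}}$.
   Context: Setup (S): Let $\mathfrak{A}=\varinjlim(\mathfrak{A}_n,\phi_n)$ be an AF C$^*$-algebra with $\mathfrak{A}_0=\mathbb{C}$, $\mathfrak{A}_n$ having exactly $n+1$ summands, $\phi_n$ unital injective $*$-homomorphisms with multiplicity matrices $\overline{A}_{n,n+1}\in M_{n+2,n+1}(\mathbb{N})$ ($(i,j)$ entry = multiplicity of summand $j$ of $\mathfrak{A}_n$ in summand $i$ of $\mathfrak{A}_{n+1}$), each of rank $n+1$. The Bratteli diagram has vertices $v(i,n)$, $1\le i\le n+1$, and $(\overline{A}_{n,n+1})_{ij}$ edges from $v(j,n)$ to $v(i,n+1)$. A minimal reduction is a subgraph with the same vertices, obtained by deleting edges only, in which for all $n\ge 0$ each vertex at level $n+1$ receives exactly one edge from level $n$ and each vertex at level $n$ emits at least one edge to level $n+1$. Fix a minimal reduction. Then for each $n\ge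 1$ there are unique $1\le r'_n<r_n\le n+1$ and $1\le a_n\le n$ such that $v(r'_n,n)$ and $v(r_n,n)$ are the two vertices joined to $v(a_n,n-1)$, every other vertex of level $n-1$ being joined to exactly one vertex of level $n$; set $r_0=1$. $X_{min}$ is the set of infinite paths $(v(i_n,n))_{n\ge0}$, $i_0=1$, in the minimal reduction, with the topology having as clopen basis the nonempty sets $B(i,n)=\{\text{paths with }i_n=i\}$; it is a compact metrizable totally disconnected space. Define the linear map $R_n:\mathbb{C}^{n+1}\to C(X_{min},\mathbb{C})$ by $R_n(\alpha_1,\dots,\alpha_{n+1})=\sum_{l=0}^n\alpha_{l+1}\chi_{B(r_l,l)}$. Completion data (C): $K_0(\mathfrak{A}_n)$ is identified with $\mathbb{Z}^{n+1}$ (column vectors, positive cone $\mathbb{Z}_+^{n+1}$), $K_0(\phi_n)=\phi_{n*}$ is multiplication by $\overline{A}_{n,n+1}$, and $K_0(\mathfrak{A})=\varinjlim(\mathbb{Z}^{n+1},\phi_{n*})$ with order unit the image of $1\in\mathbb{Z}=K_0(\mathfrak{A}_0)$. For each $n\ge 0$ choose a column $c_n\in\mathbb{Z}^{n+2}$ such that $A_{n,n+1}=[\,\overline{A}_{n,n+1}\mid c_n\,]\in M_{n+2}(\mathbb{Z})$ is invertible. Put $A_n=(A_{0,1}^{-1}\oplus I_{n-1})(A_{1,2}^{-1}\oplus I_{n-2})\cdots(A_{n-2,n-1}^{-1}\oplus I_1)A_{n-1,n}^{-1}$ for $n\ge1$ (so $A_1=A_{0,1}^{-1}$), let $G=\bigcup_{n\ge1}\{a/\det(A_n^{-1}):a\in\mathbb{Z}\}\subseteq\mathbb{Q}$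 with the discrete topology, and $\Phi_n=R_n\circ A_n$ restricted to $\mathbb{Z}^{n+1}$. *)

theory Defs
  imports "HOL-Analysis.Abstract_Topology" "HOL-Library.Indicator_Function" "Jordan_Normal_Form.DL_Rank"
begin

text \<open>Ab n is the multiplicity matrix from level n to level n+1,
  an (n+2) x (n+1) integer matrix; entry (i,j) with 1-based indices i,j of the paper is
  Ab n $$ (i-1, j-1). Vertices v(i,n) are represented by 1-based indices i in {1..n+1}.
  E n j i means: the minimal reduction keeps an edge from v(j,n) to v(i,n+1).\<close>

definition min_reduction :: "(nat \<Rightarrow> int mat) \<Rightarrow> (nat \<Rightarrow> nat \<Rightarrow> nat \<Rightarrow> bool) \<Rightarrow> bool" where
  "min_reduction Ab E \<longleftrightarrow>
     (\<forall>n j i. E n j i \<longrightarrow> j \<in> {1..n+1} \<and> i \<in> {1..n+2} \<and> Ab n $$ (i-1, j-1) \<ge> 1)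
   \<and> (\<forall>n. \<forall>i\<in>{1..n+2}. \<exists>!j. E n j i)
   \<and> (\<forall>n. \<forall>j\<in>{1..n+1}. \<exists>i. E n j i)"

text \<open>r_n: for n \<ge> 1 the larger of the two level-n vertices joined to the same vertex
  a_n of level n-1; r_0 = 1.\<close>
definition rr :: "(nat \<Rightarrow> nat \<Rightarrow> nat \<Rightarrow> bool) \<Rightarrow> nat \<Rightarrow> nat" where
  "rr E n = (if n = 0 then 1 else
     (THE r. \<exists>r' a. 1 \<le> r' \<and> r' < r \<and> r \<le> n+1 \<and> 1 \<le> a \<and> a \<le> n
                    \<and> E (n-1) a r' \<and> E (n-1) a r))"

definition Xmin :: "(nat \<Rightarrow> nat \<Rightarrow> nat \<Rightarrow> bool) \<Rightarrow> (nat \<Rightarrow> nat) set" where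
  "Xmin E = {x. x 0 = 1 \<and> (\<forall>n. E n (x n) (x (Suc n)))}"

definition Bset :: "(nat \<Rightarrow> nat \<Rightarrow> nat \<Rightarrow> bool) \<Rightarrow> nat \<Rightarrow> nat \<Rightarrow> (nat \<Rightarrow> nat) set" where
  "Bset E i n = {x \<in> Xmin E. x n = i}"

definition Xtop :: "(nat \<Rightarrow> nat \<Rightarrow> nat \<Rightarrow> bool) \<Rightarrow> (nat \<Rightarrow> nat) topology" where
  "Xtop E = topology_generated_by {Bset E i n | i n. Bset E i n \<noteq> {}}"

definition Cfun :: "(nat \<Rightarrow> nat \<Rightarrow> nat \<Rightarrow> bool) \<Rightarrow> rat set \<Rightarrow> ((nat \<Rightarrow> nat) \<Rightarrow> rat) set" where
  "Cfun E G = {f. continuous_map (Xtop E) (discrete_topology G) f}"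

text \<open>R_n(alpha) = sum_{l=0}^n alpha_{l+1} chi_{B(r_l,l)}; alpha_{l+1} is alpha $ l.\<close>
definition Rmap :: "(nat \<Rightarrow> nat \<Rightarrow> nat \<Rightarrow> bool) \<Rightarrow> nat \<Rightarrow> rat vec \<Rightarrow> (nat \<Rightarrow> nat) \<Rightarrow> rat" where
  "Rmap E n \<alpha> = (\<lambda>x. \<Sum>l\<le>n. \<alpha> $ l * indicator (Bset E (rr E l) l) x)"

definition Acomb :: "(nat \<Rightarrow> int mat) \<Rightarrow> (nat \<Rightarrow> int vec) \<Rightarrow> nat \<Rightarrow> int mat" where
  "Acomb Ab c n = mat (n+2) (n+2) (\<lambda>(i,j). if j < n+1 then Ab n $$ (i,j) else c n $ i)"

definition mat_inv :: "nat \<Rightarrow> rat mat \<Rightarrow> rat mat" where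
  "mat_inv k M = (THE B. B \<in> carrier_mat k k \<and> M * B = 1\<^sub>m k \<and> B * M = 1\<^sub>m k)"

definition dsum :: "rat mat \<Rightarrow> nat \<Rightarrow> rat mat" where
  "dsum M k = four_block_mat M (0\<^sub>m (dim_row M) k) (0\<^sub>m k (dim_col M)) (1\<^sub>m k)"

text \<open>A_n = (A_{0,1}^{-1} \<oplus> I_{n-1}) (A_{1,2}^{-1} \<oplus> I_{n-2}) ... (A_{n-1,n}^{-1} \<oplus> I_0).\<close>
definition Amat :: "(nat \<Rightarrow> int mat) \<Rightarrow> (nat \<Rightarrow> int vec) \<Rightarrow> nat \<Rightarrow> rat mat" where
  "Amat Ab c n = foldr (\<lambda>k M. dsum (mat_inv (k+2) (map_mat rat_of_int (Acomb Ab c k))) (n-1-k) * M)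
                   [0..<n] (1\<^sub>m (n+1))"

definition Gset :: "(nat \<Rightarrow> int mat) \<Rightarrow> (nat \<Rightarrow> int vec) \<Rightarrow> rat set" where
  "Gset Ab c = {q. \<exists>n\<ge>1. \<exists>a::int. q = rat_of_int a / det (mat_inv (n+1) (Amat Ab c n))}"

definition Phi :: "(nat \<Rightarrow> int mat) \<Rightarrow> (nat \<Rightarrow> int vec) \<Rightarrow> (nat \<Rightarrow> nat \<Rightarrow> nat \<Rightarrow> bool)
    \<Rightarrow> nat \<Rightarrow> int vec \<Rightarrow> (nat \<Rightarrow> nat) \<Rightarrow> rat" where
  "Phi Ab c E n v = Rmap E n (Amat Ab c n *\<^sub>v map_vec rat_of_int v)"

text \<open>The direct limit K_0 = lim (Z^{n+1}, phi_{n*}), phi_{n*} v = Ab n *v v.\<close>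
fun phi_to :: "(nat \<Rightarrow> int mat) \<Rightarrow> nat \<Rightarrow> nat \<Rightarrow> int vec \<Rightarrow> int vec" where
  "phi_to Ab n 0 v = v"
| "phi_to Ab n (Suc k) v = (if Suc k \<le> n then v else Ab k *\<^sub>v phi_to Ab n k v)"

definition lim_dom :: "(nat \<times> int vec) set" where
  "lim_dom = (SIGMA n:UNIV. carrier_vec (n+1))"

definition lim_rel :: "(nat \<Rightarrow> int mat) \<Rightarrow> ((nat \<times> int vec) \<times> (nat \<times> int vec)) set" where
  "lim_rel Ab = {((n,v),(m,w)). (n,v) \<in> lim_dom \<and> (m,w) \<in> lim_dom \<and>
                     (\<exists>k\<ge>max n m. phi_to Ab n k v = phi_to Ab m k w)}"

definition K0 :: "(nat \<Rightarrow> int mat) \<Rightarrow> (nat \<times> int vec) set set" where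
  "K0 Ab = lim_dom // lim_rel Ab"

definition iota :: "(nat \<Rightarrow> int mat) \<Rightarrow> nat \<Rightarrow> int vec \<Rightarrow> (nat \<times> int vec) set" where
  "iota Ab n v = lim_rel Ab `` {(n,v)}"

definition K0_add :: "(nat \<Rightarrow> int mat) \<Rightarrow> (nat \<times> int vec) set \<Rightarrow> (nat \<times> int vec) set \<Rightarrow> (nat \<times> int vec) set" where
  "K0_add Ab X Y = (let (n,v) = (SOME p. p \<in> X); (m,w) = (SOME p. p \<in> Y); k = max n m
                    in iota Ab k (phi_to Ab n k v + phi_to Ab m k w))"

text \<open>Order unit: image of 1 in Z = K_0(A_0).\<close>
definition K0_unit :: "(nat \<Rightarrow> int mat) \<Rightarrow> (nat \<times> int vec) set" where
  "K0_unit Ab = iota Ab 0 (vec 1 (\<lambda>_. 1))"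

end

theory Submission
  imports Defs
begin



lemma dsum_carrier[simp]: "M \<in> carrier_mat r c \<Longrightarrow> dsum M k \<in> carrier_mat (r+k) (c+k)"
  unfolding dsum_def by auto

lemma dsum_dims[simp]: "dim_row (dsum M k) = dim_row M + k" "dim_col (dsum M k) = dim_col M + k"
  unfolding dsum_def by auto

lemma dsum_index: "i < dim_row M + k \<Longrightarrow> j < dim_col M + k \<Longrightarrow> dsum M k $$ (i,j) =
   (if i < dim_row M then if j < dim_col M then M $$ (i,j) else 0
    else if j < dim_col M then 0 else (if i - dim_row M = j - dim_col M then 1 else 0))"
  unfolding dsum_def by auto

lemma dsum_one: "dsum (1\<^sub>m d) k = 1\<^sub>m (d+k)"
  unfolding dsum_def by simp

lemma dsum_0: "dsum M 0 = M"
  by (rule eq_matI, auto simp: dsum_index)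

lemma dsum_dsum: "dsum (dsum M a) b = dsum M (a+b)"
  by (rule eq_matI, auto simp: dsum_index)

lemma dsum_mult: "A \<in> carrier_mat r s \<Longrightarrow> B \<in> carrier_mat s t \<Longrightarrow> dsum A k * dsum B k = dsum (A*B) k"
  unfolding dsum_def
  by (subst mult_four_block_mat[of A r s _ k _ k _ B t _ k], auto)

lemma foldr_carrier: "(\<forall>k\<in>set L. D k \<in> carrier_mat d d) \<Longrightarrow> X \<in> carrier_mat d e \<Longrightarrow>
   foldr (\<lambda>k M. D k * M) L X \<in> carrier_mat d e"
  by (induction L) auto

lemma foldr_mult: "(\<forall>k\<in>set L. (D k :: rat mat) \<in> carrier_mat d d) \<Longrightarrow> X \<in> carrier_mat d e \<Longrightarrow>
   foldr (\<lambda>k M. D k * M) L X = foldr (\<lambda>k M. D k * M) L (1\<^sub>m d) * X"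
proof (induction L)
  case Nil then show ?case using left_mult_one_mat[of X d e] by simp
next
  case (Cons a L)
  have c: "foldr (\<lambda>k M. D k * M) L (1\<^sub>m d) \<in> carrier_mat d d"
    using Cons.prems by (intro foldr_carrier) auto
  have "foldr (\<lambda>k M. D k * M) (a#L) X = D a * (foldr (\<lambda>k M. D k * M) L (1\<^sub>m d) * X)"
    using Cons by simp
  also have "\<dots> = (D a * foldr (\<lambda>k M. D k * M) L (1\<^sub>m d)) * X"
    using Cons.prems c by (intro assoc_mult_mat[symmetric]) auto
  finally show ?case by simp
qed

lemma foldr_dsum: "(\<forall>k\<in>set L. (D k :: rat mat) \<in> carrier_mat d d) \<Longrightarrow>
  foldr (\<lambda>k M. dsum (D k) 1 * M) L (1\<^sub>m (d+1)) = dsum (foldr (\<lambda>k M. D k * M) L (1\<^sub>m d)) 1"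
proof (induction L)
  case Nil then show ?case by (simp add: dsum_one)
next
  case (Cons a L)
  have c: "foldr (\<lambda>k M. D k * M) L (1\<^sub>m d) \<in> carrier_mat d d"
    using Cons.prems by (intro foldr_carrier) auto
  show ?case using Cons c by (simp add: dsum_mult[of _ d d _ d])
qed

lemma mat_inv_eq: assumes M: "(M::rat mat) \<in> carrier_mat k k" and B: "B \<in> carrier_mat k k"
  and MB: "M * B = 1\<^sub>m k"
  shows "mat_inv k M = B"
proof -
  have BM: "B * M = 1\<^sub>m k" using mat_mult_left_right_inverse[OF M B MB] .
  show ?thesis unfolding mat_inv_def
  proof (rule the_equality)
    show "B \<in> carrier_mat k k \<and> M * B = 1\<^sub>m k \<and> B * M = 1\<^sub>m k" using B MB BM by auto
  next
    fix B' assume h: "B' \<in> carrier_mat k k \<and> M * B' = 1\<^sub>m k \<and> B' * M = 1\<^sub>m k"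
    have "B' = B' * (M * B)" using h right_mult_one_mat[of B' k k] MB by simp
    also have "\<dots> = (B' * M) * B" by (rule assoc_mult_mat[symmetric, of B' k k M k B k]) (use h M B in auto)
    also have "\<dots> = B" using h B by simp
    finally show "B' = B" .
  qed
qed

lemma mat_inv_props: assumes M: "(M::rat mat) \<in> carrier_mat k k" and d: "det M \<noteq> 0"
  shows "mat_inv k M \<in> carrier_mat k k \<and> M * mat_inv k M = 1\<^sub>m k \<and> mat_inv k M * M = 1\<^sub>m k"
proof -
  define B where "B = (1 / det M) \<cdot>\<^sub>m adj_mat M"
  have Bc: "B \<in> carrier_mat k k" unfolding B_def using adj_mat(1)[OF M] by simp
  have "M * B = (1 / det M) \<cdot>\<^sub>m (M * adj_mat M)" unfolding B_def
    using M adj_mat(1)[OF M] by (simp add: mult_smult_distrib)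
  also have "\<dots> = 1\<^sub>m k" unfolding adj_mat(2)[OF M] using d by (intro eq_matI) auto
  finally have MB: "M * B = 1\<^sub>m k" .
  have e: "mat_inv k M = B" by (rule mat_inv_eq[OF M Bc MB])
  show ?thesis unfolding e using MB Bc mat_mult_left_right_inverse[OF M Bc MB] by simp
qed




definition dsumI :: "int mat \<Rightarrow> nat \<Rightarrow> int mat" where
  "dsumI M k = four_block_mat M (0\<^sub>m (dim_row M) k) (0\<^sub>m k (dim_col M)) (1\<^sub>m k)"

lemma dsumI_carrier: "M \<in> carrier_mat r c \<Longrightarrow> dsumI M k \<in> carrier_mat (r+k) (c+k)"
  unfolding dsumI_def by auto

lemma map_dsumI: "map_mat rat_of_int (dsumI M k) = dsum (map_mat rat_of_int M) k"
  by (rule eq_matI) (auto simp: dsumI_def dsum_def)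

fun Pm :: "(nat \<Rightarrow> int mat) \<Rightarrow> (nat \<Rightarrow> int vec) \<Rightarrow> nat \<Rightarrow> int mat" where
  "Pm Ab c 0 = 1\<^sub>m 1"
| "Pm Ab c (Suc n) = Acomb Ab c n * dsumI (Pm Ab c n) 1"

locale thm9 =
  fixes Ab :: "nat \<Rightarrow> int mat" and E :: "nat \<Rightarrow> nat \<Rightarrow> nat \<Rightarrow> bool" and c :: "nat \<Rightarrow> int vec"
  assumes dims: "\<forall>n. Ab n \<in> carrier_mat (n+2) (n+1)"
    and red: "min_reduction Ab E"
    and cdim: "\<forall>n. c n \<in> carrier_vec (n+2)"
    and cinv: "\<forall>n. det (Acomb Ab c n) \<noteq> 0"
begin

abbreviation "Aq k \<equiv> map_mat rat_of_int (Acomb Ab c k)"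
abbreviation "Ai k \<equiv> mat_inv (k+2) (Aq k)"
abbreviation "AM n \<equiv> Amat Ab c n"
abbreviation "Q n \<equiv> map_mat rat_of_int (Pm Ab c n)"

lemma Acomb_carrier: "Acomb Ab c k \<in> carrier_mat (k+2) (k+2)"
  unfolding Acomb_def by simp

lemma Ai_props: "Ai k \<in> carrier_mat (k+2) (k+2) \<and> Aq k * Ai k = 1\<^sub>m (k+2) \<and> Ai k * Aq k = 1\<^sub>m (k+2)"
  by (rule mat_inv_props) (use Acomb_carrier cinv in \<open>auto simp: of_int_hom.hom_det\<close>)

lemma Dcar: "k < n \<Longrightarrow> dsum (Ai k) (n-1-k) \<in> carrier_mat (n+1) (n+1)"
proof -
  assume k: "k < n"
  have "dsum (Ai k) (n-1-k) \<in> carrier_mat (k+2+(n-1-k)) (k+2+(n-1-k))"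
    using Ai_props by (intro dsum_carrier) auto
  moreover have "k+2+(n-1-k) = n+1" using k by simp
  ultimately show ?thesis by simp
qed

lemma Amat_carrier: "AM n \<in> carrier_mat (n+1) (n+1)"
  unfolding Amat_def by (rule foldr_carrier) (use Dcar in simp_all)

lemma Amat_0: "AM 0 = 1\<^sub>m 1"
  unfolding Amat_def by simp

lemma Amat_Suc: "AM (Suc n) = dsum (AM n) 1 * Ai n"
proof -
  let ?D = "\<lambda>k. dsum (Ai k) (Suc n - 1 - k)"
  have car: "\<forall>k\<in>set [0..<n]. ?D k \<in> carrier_mat (n+2) (n+2)"
    using Dcar[of _ "Suc n"] by auto
  have "AM (Suc n) = foldr (\<lambda>k M. ?D k * M) [0..<n] (?D n * 1\<^sub>m (n+2))"
    unfolding Amat_def by simp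
  also have "?D n * 1\<^sub>m (n+2) = Ai n"
    using Ai_props[of n] right_mult_one_mat[of "Ai n" "n+2" "n+2"] by (simp add: dsum_0)
  also have "foldr (\<lambda>k M. ?D k * M) [0..<n] (Ai n) = foldr (\<lambda>k M. ?D k * M) [0..<n] (1\<^sub>m (n+2)) * Ai n"
    by (rule foldr_mult) (use car Ai_props in auto)
  also have "foldr (\<lambda>k M. ?D k * M) [0..<n] (1\<^sub>m (n+2))
      = foldr (\<lambda>k M. dsum (dsum (Ai k) (n-1-k)) 1 * M) [0..<n] (1\<^sub>m (n+1+1))"
    by (rule foldr_cong) (auto simp: dsum_dsum Suc_diff_Suc)
  also have "\<dots> = dsum (foldr (\<lambda>k M. dsum (Ai k) (n-1-k) * M) [0..<n] (1\<^sub>m (n+1))) 1"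
    by (rule foldr_dsum) (use Dcar in simp)
  finally show ?thesis unfolding Amat_def by simp
qed

lemma Pm_carrier: "Pm Ab c n \<in> carrier_mat (n+1) (n+1)"
proof (induction n)
  case 0 then show ?case by simp
next
  case (Suc n)
  have "dsumI (Pm Ab c n) 1 \<in> carrier_mat (n+2) (n+2)" using Suc unfolding dsumI_def by auto
  then show ?case using Acomb_carrier[of n] by simp
qed

lemma AQ: "AM n * Q n = 1\<^sub>m (n+1)"
proof (induction n)
  case 0 then show ?case by (simp add: Amat_0 of_int_hom.mat_hom_one)
next
  case (Suc n)
  have QS: "Q (Suc n) = Aq n * dsum (Q n) 1"
  proof -
    have dc: "dsumI (Pm Ab c n) 1 \<in> carrier_mat (n+2) (n+2)"
      using dsumI_carrier[OF Pm_carrier[of n], of 1] by simp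
    have "Q (Suc n) = Aq n * map_mat rat_of_int (dsumI (Pm Ab c n) 1)"
      using of_int_hom.mat_hom_mult[OF Acomb_carrier[of n] dc] by simp
    then show ?thesis unfolding map_dsumI .
  qed
  have c1: "dsum (AM n) 1 \<in> carrier_mat (n+2) (n+2)" using Amat_carrier[of n] dsum_carrier by fastforce
  have c2: "dsum (Q n) 1 \<in> carrier_mat (n+2) (n+2)" using Pm_carrier[of n] dsum_carrier[of "Q n" "n+1" "n+1" 1] by simp
  have c3: "Aq n \<in> carrier_mat (n+2) (n+2)" using Acomb_carrier[of n] by simp
  have c4: "Ai n \<in> carrier_mat (n+2) (n+2)" using Ai_props by auto
  have "AM (Suc n) * Q (Suc n) = (dsum (AM n) 1 * Ai n) * (Aq n * dsum (Q n) 1)"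
    unfolding QS Amat_Suc ..
  also have "\<dots> = dsum (AM n) 1 * ((Ai n * Aq n) * dsum (Q n) 1)"
    using c1 c2 c3 c4 by (simp add: assoc_mult_mat[of _ "n+2" "n+2" _ "n+2" _ "n+2"])
  also have "\<dots> = dsum (AM n) 1 * dsum (Q n) 1"
    using Ai_props[of n] left_mult_one_mat[OF c2] by simp
  also have "\<dots> = dsum (AM n * Q n) 1"
    using Amat_carrier[of n] Pm_carrier[of n] by (intro dsum_mult) auto
  also have "\<dots> = 1\<^sub>m (Suc n + 1)" using Suc by (simp add: dsum_one)
  finally show ?case .
qed

lemma QA: "Q n * AM n = 1\<^sub>m (n+1)"
  by (rule mat_mult_left_right_inverse[OF Amat_carrier _ AQ]) (use Pm_carrier in simp)

lemma inv_AM: "mat_inv (n+1) (AM n) = Q n"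
  by (rule mat_inv_eq[OF Amat_carrier _ AQ]) (use Pm_carrier in simp)

lemma detP: "det (Pm Ab c n) \<noteq> 0"
proof
  assume "det (Pm Ab c n) = 0"
  then have "det (Q n) = 0" by (simp add: of_int_hom.hom_det)
  then have "det (AM n * Q n) = 0" using det_mult[OF Amat_carrier, of "Q n"] Pm_carrier[of n] by simp
  then show False unfolding AQ by simp
qed

lemma AM_adj: "of_int (det (Pm Ab c n)) \<cdot>\<^sub>m AM n = map_mat rat_of_int (adj_mat (Pm Ab c n))"
proof -
  let ?P = "Pm Ab c n"
  let ?d = "rat_of_int (det ?P)"
  have ac: "adj_mat ?P \<in> carrier_mat (n+1) (n+1)" using adj_mat(1)[OF Pm_carrier] .
  have "Q n * map_mat rat_of_int (adj_mat ?P) = map_mat rat_of_int (?P * adj_mat ?P)"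
    by (rule of_int_hom.mat_hom_mult[symmetric, OF Pm_carrier ac])
  also have "\<dots> = ?d \<cdot>\<^sub>m 1\<^sub>m (n+1)" unfolding adj_mat(2)[OF Pm_carrier] by (rule eq_matI) auto
  finally have e: "Q n * map_mat rat_of_int (adj_mat ?P) = ?d \<cdot>\<^sub>m 1\<^sub>m (n+1)" .
  have "AM n * (Q n * map_mat rat_of_int (adj_mat ?P)) = (AM n * Q n) * map_mat rat_of_int (adj_mat ?P)"
    using Amat_carrier[of n] Pm_carrier[of n] ac by (simp add: assoc_mult_mat[of _ "n+1" "n+1" _ "n+1" _ "n+1"])
  also have "\<dots> = map_mat rat_of_int (adj_mat ?P)" unfolding AQ using ac by simp
  finally have "AM n * (?d \<cdot>\<^sub>m 1\<^sub>m (n+1)) = map_mat rat_of_int (adj_mat ?P)" unfolding e .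
  moreover have "AM n * (?d \<cdot>\<^sub>m 1\<^sub>m (n+1)) = ?d \<cdot>\<^sub>m AM n"
    using Amat_carrier[of n] by (simp add: mult_smult_distrib[of _ "n+1" "n+1" _ "n+1"])
  ultimately show ?thesis by simp
qed

lemma AM_entry: "i < n+1 \<Longrightarrow> j < n+1 \<Longrightarrow> rat_of_int (det (Pm Ab c n)) * AM n $$ (i,j) \<in> \<int>"
proof -
  assume ij: "i < n+1" "j < n+1"
  have "rat_of_int (det (Pm Ab c n)) * AM n $$ (i,j) = (of_int (det (Pm Ab c n)) \<cdot>\<^sub>m AM n) $$ (i,j)"
    using ij Amat_carrier[of n] by simp
  also have "\<dots> = of_int (adj_mat (Pm Ab c n) $$ (i,j))" unfolding AM_adj
    using ij adj_mat(1)[OF Pm_carrier[of n]] by simp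
  finally show ?thesis by simp
qed

lemma AM_vec: assumes v: "v \<in> carrier_vec (n+1)" and l: "l < n+1"
  shows "rat_of_int (det (Pm Ab c n)) * (AM n *\<^sub>v map_vec rat_of_int v) $ l \<in> \<int>"
proof -
  have eq: "(AM n *\<^sub>v map_vec rat_of_int v) $ l = (\<Sum>j\<in>{0..<n+1}. AM n $$ (l,j) * rat_of_int (v $ j))"
    using Amat_carrier[of n] v l by (simp add: scalar_prod_def)
  then have "rat_of_int (det (Pm Ab c n)) * (AM n *\<^sub>v map_vec rat_of_int v) $ l
     = (\<Sum>j\<in>{0..<n+1}. (rat_of_int (det (Pm Ab c n)) * AM n $$ (l,j)) * rat_of_int (v $ j))"
    unfolding eq by (simp only: sum_distrib_left mult.assoc)
  also have "\<dots> \<in> \<int>" using l by (intro Ints_sum Ints_mult[OF AM_entry]) auto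
  finally show ?thesis .
qed

end



context thm9 begin

lemma E1: "E n j i \<Longrightarrow> j \<in> {1..n+1} \<and> i \<in> {1..n+2}"
  using red unfolding min_reduction_def by blast
lemma E2: "i \<in> {1..n+2} \<Longrightarrow> \<exists>!j. E n j i"
  using red unfolding min_reduction_def by blast
lemma E3: "j \<in> {1..n+1} \<Longrightarrow> \<exists>i. E n j i"
  using red unfolding min_reduction_def by blast

lemma E_uniq: "E n j i \<Longrightarrow> E n j' i \<Longrightarrow> j = j'"
  using E1 E2 by blast

lemma Xmin_range: "x \<in> Xmin E \<Longrightarrow> x n \<in> {1..n+1}"
  unfolding Xmin_def using E1 by blast

lemma path_prefix: assumes x: "x \<in> Xmin E" and y: "y \<in> Xmin E" and eq: "x n = y n" and l: "l \<le> n"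
  shows "x l = y l"
proof -
  have "\<forall>l. l + d = n \<longrightarrow> x l = y l" for d
  proof (induction d)
    case 0 then show ?case using eq by simp
  next
    case (Suc d)
    show ?case
    proof (intro allI impI)
      fix l assume "l + Suc d = n"
      then have "x (Suc l) = y (Suc l)" using Suc by simp
      moreover have "E l (x l) (x (Suc l))" "E l (y l) (y (Suc l))" using x y unfolding Xmin_def by auto
      ultimately show "x l = y l" using E_uniq by metis
    qed
  qed
  then show ?thesis using l by (metis le_add_diff_inverse)
qed

lemma extend_path: assumes p0: "p 0 = (1::nat)" and pE: "\<forall>l<m. E l (p l) (p (Suc l))"
  shows "\<exists>x\<in>Xmin E. \<forall>l\<le>m. x l = p l"
proof -
  define x where "x = rec_nat 1 (\<lambda>k xk. if Suc k \<le> m then p (Suc k) else (SOME i. E k xk i))"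
  have x0: "x 0 = 1" unfolding x_def by simp
  have xS: "x (Suc k) = (if Suc k \<le> m then p (Suc k) else (SOME i. E k (x k) i))" for k
    unfolding x_def by simp
  have xp: "k \<le> m \<Longrightarrow> x k = p k" for k
    by (cases k) (auto simp: x0 p0 xS)
  have xr: "x k \<in> {1..k+1}" for k
  proof (induction k)
    case 0 then show ?case using x0 by simp
  next
    case (Suc k)
    show ?case
    proof (cases "Suc k \<le> m")
      case True
      then have "E k (p k) (p (Suc k))" using pE by simp
      then show ?thesis using E1 xS True by auto
    next
      case False
      obtain i where "E k (x k) i" using E3 Suc by blast
      then have "E k (x k) (x (Suc k))" using xS False by (metis someI)
      then show ?thesis using E1 by auto
    qed
  qed
  have xE: "E k (x k) (x (Suc k))" for k
  proof (cases "Suc k \<le> m")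
    case True
    then show ?thesis using pE xp xS by simp
  next
    case False
    obtain i where "E k (x k) i" using E3 xr by blast
    then show ?thesis using xS False by (metis someI)
  qed
  have "x \<in> Xmin E" unfolding Xmin_def using x0 xE by simp
  then show ?thesis using xp by blast
qed

lemma backward_path: "i \<in> {1..m+1} \<Longrightarrow> \<exists>p. p 0 = (1::nat) \<and> p m = i \<and> (\<forall>l<m. E l (p l) (p (Suc l)))"
proof (induction m arbitrary: i)
  case 0 then show ?case by (intro exI[of _ "\<lambda>_. 1"]) auto
next
  case (Suc m)
  obtain j where j: "E m j i" using E2[of i m] Suc.prems by auto
  then have "j \<in> {1..m+1}" using E1 by auto
  then obtain p where p: "p 0 = 1" "p m = j" "\<forall>l<m. E l (p l) (p (Suc l))" using Suc.IH by blast
  show ?case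
    by (rule exI[of _ "p(Suc m := i)"]) (use p j in \<open>auto simp: less_Suc_eq\<close>)
qed

lemma Xmin_nonempty: "\<exists>x. x \<in> Xmin E"
  using extend_path[of "\<lambda>_. 1" 0] by auto

definition par :: "nat \<Rightarrow> nat \<Rightarrow> nat" where "par n i = (THE j. E n j i)"

lemma par: "i \<in> {1..n+2} \<Longrightarrow> E n (par n i) i \<and> par n i \<in> {1..n+1}"
  unfolding par_def using E2[of i n] E1 by (metis theI)

lemma par_eq: "E n j i \<Longrightarrow> par n i = j"
  using par E1 E_uniq by blast

lemma rr_spec: assumes m: "m = Suc n"
  shows "\<exists>r' a. 1 \<le> r' \<and> r' < rr E m \<and> rr E m \<le> m+1 \<and> 1 \<le> a \<and> a \<le> m \<and> E (m-1) a r' \<and> E (m-1) a (rr E m)"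
proof -
  let ?P = "\<lambda>r. \<exists>r' a. 1 \<le> r' \<and> r' < r \<and> r \<le> m+1 \<and> 1 \<le> a \<and> a \<le> m \<and> E (m-1) a r' \<and> E (m-1) a r"
  let ?A = "{1..n+2}"
  have img: "par n ` ?A \<subseteq> {1..n+1}" using par by auto
  have "\<not> inj_on (par n) ?A"
  proof
    assume "inj_on (par n) ?A"
    then have "card (par n ` ?A) = n+2" by (simp add: card_image)
    moreover have "card (par n ` ?A) \<le> n+1" using card_mono[OF _ img] by simp
    ultimately show False by simp
  qed
  then obtain i1 i2 where i: "i1 \<in> ?A" "i2 \<in> ?A" "i1 < i2" "par n i1 = par n i2"
    unfolding inj_on_def by (metis linorder_neqE_nat)
  have ex: "?P i2"
    using i par[of i1 n] par[of i2 n] m by (intro exI[of _ i1] exI[of _ "par n i1"]) auto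
  have uniq: "r1 = r2" if h1: "?P r1" and h2: "?P r2" for r1 r2
  proof (rule ccontr)
    assume ne: "r1 \<noteq> r2"
    from h1 obtain r1' a1 where a1: "1 \<le> r1'" "r1' < r1" "r1 \<le> m+1" "E n a1 r1'" "E n a1 r1" using m by auto
    from h2 obtain r2' a2 where a2: "1 \<le> r2'" "r2' < r2" "r2 \<le> m+1" "E n a2 r2'" "E n a2 r2" using m by auto
    have inj: "inj_on (par n) (?A - {r})" if r: "E n a r" "E n a r'" "r' \<noteq> r" for a r r'
    proof (rule eq_card_imp_inj_on)
      show "finite (?A - {r})" by simp
      have "par n ` (?A - {r}) = {1..n+1}"
      proof
        show "par n ` (?A - {r}) \<subseteq> {1..n+1}" using img by auto
        show "{1..n+1} \<subseteq> par n ` (?A - {r})"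
        proof
          fix b assume b: "b \<in> {1..n+1}"
          show "b \<in> par n ` (?A - {r})"
          proof (cases "b = a")
            case True
            then show ?thesis using r E1[of n a r'] par_eq[of n a r'] by (intro image_eqI[of _ _ r']) auto
          next
            case False
            obtain i where "E n b i" using E3 b by blast
            moreover have "i \<noteq> r" using False r(1) \<open>E n b i\<close> E_uniq by blast
            ultimately show ?thesis using E1[of n b i] par_eq[of n b i] by (intro image_eqI[of _ _ i]) auto
          qed
        qed
      qed
      moreover have "r \<in> ?A" using E1 r by auto
      ultimately show "card (par n ` (?A - {r})) = card (?A - {r})" by simp
    qed
    have i1: "inj_on (par n) (?A - {r1})" using inj[of a1 r1 r1'] a1 by simp
    have i2: "inj_on (par n) (?A - {r2})" using inj[of a2 r2 r2'] a2 by simp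
    have p2: "par n r2 = par n r2'" using par_eq a2 by metis
    have p1: "par n r1 = par n r1'" using par_eq a1 by metis
    have "r1 = r2'"
    proof (rule ccontr)
      assume "r1 \<noteq> r2'"
      then have "r2 \<in> ?A - {r1}" "r2' \<in> ?A - {r1}" using ne E1 a2 by auto
      then have "r2 = r2'" using i1 p2 unfolding inj_on_def by blast
      then show False using a2 by simp
    qed
    moreover have "r2 = r1'"
    proof (rule ccontr)
      assume "r2 \<noteq> r1'"
      then have "r1 \<in> ?A - {r2}" "r1' \<in> ?A - {r2}" using ne E1 a1 by auto
      then have "r1 = r1'" using i2 p1 unfolding inj_on_def by blast
      then show False using a1 by simp
    qed
    ultimately show False using a1 a2 by simp
  qed
  have "rr E m = i2" unfolding rr_def using m ex uniq by (simp add: the_equality)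
  then show ?thesis using ex by simp
qed

lemma ind_eq: "x \<in> Xmin E \<Longrightarrow> y \<in> Xmin E \<Longrightarrow> x l = y l \<Longrightarrow>
   indicator (Bset E r l) x = (indicator (Bset E r l) y :: rat)"
  unfolding Bset_def indicator_def by simp

lemma R_indep: "\<forall>x\<in>Xmin E. (\<Sum>l\<le>n. a l * indicator (Bset E (rr E l) l) x) = (0::rat) \<Longrightarrow> \<forall>l\<le>n. a l = 0"
proof (induction n)
  case 0
  obtain x where x: "x \<in> Xmin E" using Xmin_nonempty by blast
  then have "x \<in> Bset E (rr E 0) 0" unfolding Bset_def rr_def Xmin_def by simp
  then show ?case using 0 x by (force simp: indicator_def)
next
  case (Suc n)
  obtain r' av where ra: "1 \<le> r'" "r' < rr E (Suc n)" "E n av r'" "E n av (rr E (Suc n))"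
    using rr_spec[of "Suc n" n] by auto
  let ?r = "rr E (Suc n)"
  have "av \<in> {1..n+1}" using E1 ra by auto
  then obtain p where p: "p 0 = 1" "p n = av" "\<forall>l<n. E l (p l) (p (Suc l))" using backward_path by blast
  have pr: "\<forall>l<Suc n. E l ((p(Suc n := r)) l) ((p(Suc n := r)) (Suc l))" if "E n av r" for r
    using p that by (auto simp: less_Suc_eq)
  obtain x where x: "x \<in> Xmin E" "\<forall>l\<le>Suc n. x l = (p(Suc n := ?r)) l"
    using extend_path[of "p(Suc n := ?r)" "Suc n"] pr[OF ra(4)] p by auto
  obtain y where y: "y \<in> Xmin E" "\<forall>l\<le>Suc n. y l = (p(Suc n := r')) l"
    using extend_path[of "p(Suc n := r')" "Suc n"] pr[OF ra(3)] p by auto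
  have xy: "l \<le> n \<Longrightarrow> x l = y l" for l using x y by simp
  have sx: "(\<Sum>l\<le>n. a l * indicator (Bset E (rr E l) l) x) = (\<Sum>l\<le>n. a l * indicator (Bset E (rr E l) l) y)"
    using ind_eq[OF x(1) y(1) xy] by (intro sum.cong) auto
  have ix: "indicator (Bset E ?r (Suc n)) x = (1::rat)" using x unfolding Bset_def by simp
  have iy: "indicator (Bset E ?r (Suc n)) y = (0::rat)" using y ra(2) unfolding Bset_def by simp
  have ex0: "(\<Sum>l\<le>n. a l * indicator (Bset E (rr E l) l) x) + a (Suc n) * indicator (Bset E ?r (Suc n)) x = 0"
    using Suc.prems x(1) by (simp add: sum.atMost_Suc)
  have ey0: "(\<Sum>l\<le>n. a l * indicator (Bset E (rr E l) l) y) + a (Suc n) * indicator (Bset E ?r (Suc n)) y = 0"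
    using Suc.prems y(1) by (simp add: sum.atMost_Suc)
  have ex: "(\<Sum>l\<le>n. a l * indicator (Bset E (rr E l) l) x) + a (Suc n) = 0"
    using ex0 unfolding ix by simp
  have ey: "(\<Sum>l\<le>n. a l * indicator (Bset E (rr E l) l) x) = 0"
    using ey0 unfolding iy sx by simp
  have "a (Suc n) = 0" using ex ey by simp
  moreover have "\<forall>x\<in>Xmin E. (\<Sum>l\<le>n. a l * indicator (Bset E (rr E l) l) x) = (0::rat)"
    using Suc.prems \<open>a (Suc n) = 0\<close> by (simp add: sum.atMost_Suc)
  ultimately show ?case using Suc.IH by (auto simp: le_Suc_eq)
qed

end



definition extv :: "nat \<Rightarrow> 'a vec \<Rightarrow> 'a::zero vec" where
  "extv d w = vec (d+1) (\<lambda>i. if i < d then w $ i else 0)"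

lemma extv_carrier[simp]: "extv d w \<in> carrier_vec (d+1)"
  unfolding extv_def by simp

lemma dsum_ext: assumes M: "(M::rat mat) \<in> carrier_mat d d" and w: "w \<in> carrier_vec d"
  shows "dsum M 1 *\<^sub>v extv d w = extv d (M *\<^sub>v w)"
proof (rule eq_vecI)
  show "dim_vec (dsum M 1 *\<^sub>v extv d w) = dim_vec (extv d (M *\<^sub>v w))" using M by (simp add: extv_def)
next
  fix i assume "i < dim_vec (extv d (M *\<^sub>v w))"
  then have i: "i < d+1" by (simp add: extv_def)
  have "(dsum M 1 *\<^sub>v extv d w) $ i = (\<Sum>j\<in>{0..<d+1}. dsum M 1 $$ (i,j) * extv d w $ j)"
    using M i by (simp add: scalar_prod_def extv_def)
  also have "\<dots> = (\<Sum>j\<in>{0..<d}. dsum M 1 $$ (i,j) * w $ j)"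
    by (simp add: extv_def)
  also have "\<dots> = (if i < d then (\<Sum>j\<in>{0..<d}. M $$ (i,j) * w $ j) else 0)"
    using M i by (auto simp: dsum_index intro!: sum.cong)
  also have "\<dots> = extv d (M *\<^sub>v w) $ i"
    using M w i by (simp add: extv_def scalar_prod_def)
  finally show "(dsum M 1 *\<^sub>v extv d w) $ i = extv d (M *\<^sub>v w) $ i" .
qed

context thm9 begin

abbreviation "PH n \<equiv> Phi Ab c E n"

lemma Aq_ext: assumes w: "w \<in> carrier_vec (n+1)"
  shows "Aq n *\<^sub>v extv (n+1) w = map_mat rat_of_int (Ab n) *\<^sub>v w"
proof (rule eq_vecI)
  show "dim_vec (Aq n *\<^sub>v extv (n+1) w) = dim_vec (map_mat rat_of_int (Ab n) *\<^sub>v w)"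
    using dims[rule_format, of n] Acomb_carrier[of n] by simp
next
  fix i assume "i < dim_vec (map_mat rat_of_int (Ab n) *\<^sub>v w)"
  then have i: "i < n+2" using dims[rule_format, of n] by simp
  have "(Aq n *\<^sub>v extv (n+1) w) $ i = (\<Sum>j\<in>{0..<n+2}. Aq n $$ (i,j) * extv (n+1) w $ j)"
    using Acomb_carrier[of n] i by (simp add: scalar_prod_def extv_def)
  also have "\<dots> = (\<Sum>j\<in>{0..<n+1}. Aq n $$ (i,j) * w $ j)"
    by (simp add: extv_def)
  also have "\<dots> = (\<Sum>j\<in>{0..<n+1}. rat_of_int (Ab n $$ (i,j)) * w $ j)"
    using i by (intro sum.cong) (auto simp: Acomb_def)
  also have "\<dots> = (map_mat rat_of_int (Ab n) *\<^sub>v w) $ i"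
    using dims[rule_format, of n] w i by (simp add: scalar_prod_def)
  finally show "(Aq n *\<^sub>v extv (n+1) w) $ i = (map_mat rat_of_int (Ab n) *\<^sub>v w) $ i" .
qed

lemma Rmap_ext: "Rmap E (n+1) (extv (n+1) u) = Rmap E n u"
  unfolding Rmap_def by (rule ext) (simp add: extv_def)

lemma Phi_compat: assumes v: "v \<in> carrier_vec (n+1)"
  shows "PH (n+1) (Ab n *\<^sub>v v) = PH n v"
proof -
  let ?w = "map_vec rat_of_int v"
  have w: "?w \<in> carrier_vec (n+1)" using v by simp
  have c4: "Ai n \<in> carrier_mat (n+2) (n+2)" using Ai_props by auto
  have c3: "Aq n \<in> carrier_mat (n+2) (n+2)" using Acomb_carrier[of n] by simp
  have c1: "dsum (AM n) 1 \<in> carrier_mat (n+2) (n+2)" using Amat_carrier[of n] dsum_carrier by fastforce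
  have ec: "extv (n+1) ?w \<in> carrier_vec (n+2)" using extv_carrier[of "n+1" ?w] by simp
  have "map_vec rat_of_int (Ab n *\<^sub>v v) = map_mat rat_of_int (Ab n) *\<^sub>v ?w"
    using of_int_hom.mult_mat_vec_hom[of "Ab n" "n+2" "n+1" v] dims[rule_format, of n] v by simp
  also have "\<dots> = Aq n *\<^sub>v extv (n+1) ?w" using Aq_ext[OF w] by simp
  finally have e1: "map_vec rat_of_int (Ab n *\<^sub>v v) = Aq n *\<^sub>v extv (n+1) ?w" .
  have "AM (n+1) *\<^sub>v (Aq n *\<^sub>v extv (n+1) ?w) = (dsum (AM n) 1 * Ai n) *\<^sub>v (Aq n *\<^sub>v extv (n+1) ?w)"
    using Amat_Suc by simp
  also have "\<dots> = dsum (AM n) 1 *\<^sub>v (Ai n *\<^sub>v (Aq n *\<^sub>v extv (n+1) ?w))"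
    using c1 c3 c4 ec by (simp add: assoc_mult_mat_vec[of _ "n+2" "n+2"])
  also have "Ai n *\<^sub>v (Aq n *\<^sub>v extv (n+1) ?w) = (Ai n * Aq n) *\<^sub>v extv (n+1) ?w"
    using c3 c4 ec by (simp add: assoc_mult_mat_vec[of _ "n+2" "n+2"])
  also have "\<dots> = extv (n+1) ?w" using Ai_props[of n] ec by simp
  also have "dsum (AM n) 1 *\<^sub>v extv (n+1) ?w = extv (n+1) (AM n *\<^sub>v ?w)"
    by (rule dsum_ext[OF Amat_carrier w])
  finally have e2: "AM (n+1) *\<^sub>v map_vec rat_of_int (Ab n *\<^sub>v v) = extv (n+1) (AM n *\<^sub>v ?w)"
    unfolding e1 .
  show ?thesis unfolding Phi_def e2 Rmap_ext ..
qed

lemma Phi_add: assumes v: "v \<in> carrier_vec (n+1)" and w: "w \<in> carrier_vec (n+1)"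
  shows "PH n (v + w) = (\<lambda>x. PH n v x + PH n w x)"
proof -
  have m: "map_vec rat_of_int (v + w) = map_vec rat_of_int v + map_vec rat_of_int w"
    using v w by (intro eq_vecI) auto
  have e: "AM n *\<^sub>v map_vec rat_of_int (v + w) = AM n *\<^sub>v map_vec rat_of_int v + AM n *\<^sub>v map_vec rat_of_int w"
    unfolding m using v w by (intro mult_add_distrib_mat_vec[OF Amat_carrier]) auto
  let ?a = "AM n *\<^sub>v map_vec rat_of_int v"
  let ?b = "AM n *\<^sub>v map_vec rat_of_int w"
  show ?thesis unfolding Phi_def e Rmap_def
  proof (rule ext)
    fix x
    have "(\<Sum>l\<le>n. (?a + ?b) $ l * indicator (Bset E (rr E l) l) x)
        = (\<Sum>l\<le>n. ?a $ l * indicator (Bset E (rr E l) l) x + ?b $ l * indicator (Bset E (rr E l) l) x)"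
      by (rule sum.cong) (use Amat_carrier[of n] in \<open>auto simp: distrib_right\<close>)
    then show "(\<Sum>l\<le>n. (?a + ?b) $ l * indicator (Bset E (rr E l) l) x)
        = (\<Sum>l\<le>n. ?a $ l * indicator (Bset E (rr E l) l) x) + (\<Sum>l\<le>n. ?b $ l * indicator (Bset E (rr E l) l) x)"
      by (simp add: sum.distrib)
  qed
qed

lemma Phi_inj: assumes v: "v \<in> carrier_vec (n+1)" and w: "w \<in> carrier_vec (n+1)"
  and eq: "PH n v = PH n w"
  shows "v = w"
proof -
  let ?a = "AM n *\<^sub>v map_vec rat_of_int v"
  let ?b = "AM n *\<^sub>v map_vec rat_of_int w"
  have "\<forall>x\<in>Xmin E. (\<Sum>l\<le>n. (?a $ l - ?b $ l) * indicator (Bset E (rr E l) l) x) = (0::rat)"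
  proof
    fix x
    have "Rmap E n ?a x = Rmap E n ?b x" using eq unfolding Phi_def by simp
    then show "(\<Sum>l\<le>n. (?a $ l - ?b $ l) * indicator (Bset E (rr E l) l) x) = (0::rat)"
      unfolding Rmap_def by (simp add: left_diff_distrib sum_subtractf)
  qed
  from R_indep[OF this] have "\<forall>l\<le>n. ?a $ l = ?b $ l" by simp
  then have ab: "?a = ?b" using Amat_carrier[of n] by (intro eq_vecI) auto
  have bk: "Q n *\<^sub>v (AM n *\<^sub>v u) = u" if u: "u \<in> carrier_vec (n+1)" for u :: "rat vec"
  proof -
    have "Q n *\<^sub>v (AM n *\<^sub>v u) = (Q n * AM n) *\<^sub>v u"
      by (rule assoc_mult_mat_vec[symmetric, of _ "n+1" "n+1" _ "n+1"]) (use Pm_carrier[of n] Amat_carrier[of n] u in auto)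
    also have "\<dots> = u" unfolding QA using u by simp
    finally show ?thesis .
  qed
  have "map_vec rat_of_int v = Q n *\<^sub>v ?a" using bk[of "map_vec rat_of_int v"] v by simp
  also have "\<dots> = map_vec rat_of_int w" unfolding ab using bk[of "map_vec rat_of_int w"] w by simp
  finally have m: "map_vec rat_of_int v = map_vec rat_of_int w" .
  show ?thesis
  proof (rule eq_vecI)
    fix i assume "i < dim_vec w"
    then have "map_vec rat_of_int v $ i = map_vec rat_of_int w $ i" using m by simp
    then show "v $ i = w $ i" using v w \<open>i < dim_vec w\<close> by simp
  qed (use v w in simp)
qed

lemma Xtop_topspace: "topspace (Xtop E) = Xmin E"
proof -
  have "\<Union>{Bset E i n | i n. Bset E i n \<noteq> {}} = Xmin E"
  proof
    show "\<Union>{Bset E i n | i n. Bset E i n \<noteq> {}} \<subseteq> Xmin E" unfolding Bset_def by auto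
    show "Xmin E \<subseteq> \<Union>{Bset E i n | i n. Bset E i n \<noteq> {}}"
    proof
      fix x assume x: "x \<in> Xmin E"
      then have "x \<in> Bset E (x 0) 0" unfolding Bset_def by simp
      then show "x \<in> \<Union>{Bset E i n | i n. Bset E i n \<noteq> {}}" by blast
    qed
  qed
  then show ?thesis unfolding Xtop_def by simp
qed

lemma Rmap_local: "x \<in> Xmin E \<Longrightarrow> y \<in> Xmin E \<Longrightarrow> y n = x n \<Longrightarrow> Rmap E n \<alpha> y = Rmap E n \<alpha> x"
  unfolding Rmap_def by (intro sum.cong refl) (metis ind_eq path_prefix atMost_iff)

lemma Rmap_Cfun: assumes G: "\<forall>x\<in>Xmin E. Rmap E n \<alpha> x \<in> G"
  shows "Rmap E n \<alpha> \<in> Cfun E G"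
  unfolding Cfun_def mem_Collect_eq continuous_map_def Xtop_topspace
proof (intro conjI allI impI)
  show "Rmap E n \<alpha> \<in> Xmin E \<rightarrow> topspace (discrete_topology G)" using G by auto
next
  fix U assume "openin (discrete_topology G) U"
  show "openin (Xtop E) {x \<in> Xmin E. Rmap E n \<alpha> x \<in> U}"
  proof (subst openin_subopen, intro ballI)
    fix x assume x: "x \<in> {x \<in> Xmin E. Rmap E n \<alpha> x \<in> U}"
    have xB: "x \<in> Bset E (x n) n" using x unfolding Bset_def by simp
    have "openin (Xtop E) (Bset E (x n) n)"
      unfolding Xtop_def by (rule topology_generated_by_Basis) (use xB in blast)
    moreover have "Bset E (x n) n \<subseteq> {x \<in> Xmin E. Rmap E n \<alpha> x \<in> U}"
    proof
      fix y assume "y \<in> Bset E (x n) n"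
      then have "y \<in> Xmin E" "y n = x n" unfolding Bset_def by auto
      then show "y \<in> {x \<in> Xmin E. Rmap E n \<alpha> x \<in> U}" using x Rmap_local[of x y] by auto
    qed
    ultimately show "\<exists>T. openin (Xtop E) T \<and> x \<in> T \<and> T \<subseteq> {x \<in> Xmin E. Rmap E n \<alpha> x \<in> U}"
      using xB by blast
  qed
qed

lemma Phi_G: assumes n: "n \<ge> 1" and v: "v \<in> carrier_vec (n+1)" and x: "x \<in> Xmin E"
  shows "PH n v x \<in> Gset Ab c"
proof -
  let ?a = "AM n *\<^sub>v map_vec rat_of_int v"
  let ?d = "rat_of_int (det (Pm Ab c n))"
  have "?d * PH n v x = (\<Sum>l\<le>n. (?d * ?a $ l) * indicator (Bset E (rr E l) l) x)"
    unfolding Phi_def Rmap_def by (simp add: sum_distrib_left mult.assoc)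
  also have "\<dots> \<in> \<int>"
  proof (rule Ints_sum)
    fix l assume l: "l \<in> {..n}"
    have "?d * ?a $ l \<in> \<int>" using AM_vec[OF v] l by simp
    moreover have "indicator (Bset E (rr E l) l) x \<in> (\<int>::rat set)" by (simp add: indicator_def)
    ultimately show "?d * ?a $ l * indicator (Bset E (rr E l) l) x \<in> \<int>" by (rule Ints_mult)
  qed
  finally obtain k where k: "?d * PH n v x = of_int k" by (elim Ints_cases)
  have d0: "?d \<noteq> 0" using detP by simp
  have "det (mat_inv (n+1) (AM n)) = ?d" unfolding inv_AM by (simp add: of_int_hom.hom_det)
  then have "PH n v x = rat_of_int k / det (mat_inv (n+1) (AM n))"
    using k d0 by (simp add: field_simps)
  then show ?thesis unfolding Gset_def using n by blast
qed

lemma Phi_Cfun: "n \<ge> 1 \<Longrightarrow> v \<in> carrier_vec (n+1) \<Longrightarrow> PH n v \<in> Cfun E (Gset Ab c)"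
  unfolding Phi_def by (rule Rmap_Cfun) (use Phi_G in \<open>simp add: Phi_def\<close>)

end



context thm9 begin

lemma lim_dom_iff: "(n,v) \<in> lim_dom \<longleftrightarrow> v \<in> carrier_vec (n+1)"
  unfolding lim_dom_def by simp

lemma phi_to_le: "k \<le> n \<Longrightarrow> phi_to Ab n k v = v"
  by (cases k) auto

lemma phi_to_prop: "v \<in> carrier_vec (n+1) \<Longrightarrow> n \<le> k \<Longrightarrow>
   phi_to Ab n k v \<in> carrier_vec (k+1) \<and> PH k (phi_to Ab n k v) = PH n v"
proof (induction k)
  case 0 then show ?case by simp
next
  case (Suc k)
  show ?case
  proof (cases "Suc k \<le> n")
    case True then have "n = Suc k" using Suc.prems by simp
    then show ?thesis using True Suc.prems phi_to_le[of "Suc k" n v] by simp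
  next
    case False
    then have "n \<le> k" by simp
    with Suc.IH Suc.prems have ih: "phi_to Ab n k v \<in> carrier_vec (k+1)" "PH k (phi_to Ab n k v) = PH n v"
      by auto
    have "Ab k *\<^sub>v phi_to Ab n k v \<in> carrier_vec (Suc k + 1)" using ih dims[rule_format, of k] by simp
    moreover have "PH (k+1) (Ab k *\<^sub>v phi_to Ab n k v) = PH n v" using Phi_compat[OF ih(1)] ih(2) by simp
    ultimately show ?thesis using False by simp
  qed
qed

lemma rel_iff: assumes v: "v \<in> carrier_vec (n+1)" and w: "w \<in> carrier_vec (m+1)"
  shows "((n,v),(m,w)) \<in> lim_rel Ab \<longleftrightarrow> PH n v = PH m w"
proof
  assume "((n,v),(m,w)) \<in> lim_rel Ab"
  then obtain k where k: "k \<ge> max n m" "phi_to Ab n k v = phi_to Ab m k w" unfolding lim_rel_def by auto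
  then show "PH n v = PH m w" using phi_to_prop[of v n k] phi_to_prop[of w m k] v w by auto
next
  assume eq: "PH n v = PH m w"
  let ?k = "max n m + 1"
  have a: "phi_to Ab n ?k v \<in> carrier_vec (?k+1)" "PH ?k (phi_to Ab n ?k v) = PH n v"
    using phi_to_prop[of v n ?k] v by auto
  have b: "phi_to Ab m ?k w \<in> carrier_vec (?k+1)" "PH ?k (phi_to Ab m ?k w) = PH m w"
    using phi_to_prop[of w m ?k] w by auto
  have "phi_to Ab n ?k v = phi_to Ab m ?k w" using Phi_inj[OF a(1) b(1)] a(2) b(2) eq by simp
  then show "((n,v),(m,w)) \<in> lim_rel Ab" unfolding lim_rel_def lim_dom_def using v w
    by (auto intro!: exI[of _ ?k])
qed

lemma iota_eq: assumes v: "v \<in> carrier_vec (n+1)"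
  shows "iota Ab n v = {p \<in> lim_dom. PH (fst p) (snd p) = PH n v}"
proof (unfold set_eq_iff, intro allI)
  fix p :: "nat \<times> int vec"
  obtain m w where p: "p = (m,w)" by (cases p)
  show "p \<in> iota Ab n v \<longleftrightarrow> p \<in> {p \<in> lim_dom. PH (fst p) (snd p) = PH n v}"
  proof
    assume "p \<in> iota Ab n v"
    then have r: "((n,v),(m,w)) \<in> lim_rel Ab" unfolding iota_def p by simp
    then have "w \<in> carrier_vec (m+1)" unfolding lim_rel_def lim_dom_def by auto
    then show "p \<in> {p \<in> lim_dom. PH (fst p) (snd p) = PH n v}"
      using r rel_iff[OF v] p lim_dom_iff by auto
  next
    assume "p \<in> {p \<in> lim_dom. PH (fst p) (snd p) = PH n v}"
    then have "w \<in> carrier_vec (m+1)" "PH m w = PH n v" using p lim_dom_iff by auto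
    then show "p \<in> iota Ab n v" unfolding iota_def p using rel_iff[OF v] by auto
  qed
qed

definition Psi :: "(nat \<times> int vec) set \<Rightarrow> (nat \<Rightarrow> nat) \<Rightarrow> rat" where
  "Psi X = PH (fst (SOME p. p \<in> X)) (snd (SOME p. p \<in> X))"

lemma some_iota: assumes v: "v \<in> carrier_vec (n+1)"
  shows "(SOME p. p \<in> iota Ab n v) \<in> iota Ab n v"
proof -
  have "(n,v) \<in> iota Ab n v" using iota_eq[OF v] v lim_dom_iff by simp
  then show ?thesis by (rule someI)
qed

lemma Psi_iota: assumes v: "v \<in> carrier_vec (n+1)"
  shows "Psi (iota Ab n v) = PH n v"
  using some_iota[OF v] iota_eq[OF v] unfolding Psi_def by simp

lemma K0_iff: "X \<in> K0 Ab \<longleftrightarrow> (\<exists>n v. v \<in> carrier_vec (n+1) \<and> X = iota Ab n v)"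
  unfolding K0_def quotient_def iota_def lim_dom_def by auto

lemma PH_Cfun0: assumes v: "v \<in> carrier_vec (n+1)" shows "PH n v \<in> Cfun E (Gset Ab c)"
proof (cases "n = 0")
  case True
  have "Ab 0 *\<^sub>v v \<in> carrier_vec (1+1)" using dims[rule_format, of 0] v True by simp
  then have "PH 1 (Ab 0 *\<^sub>v v) \<in> Cfun E (Gset Ab c)" by (intro Phi_Cfun) auto
  then show ?thesis using Phi_compat[of v 0] v True by simp
next
  case False then show ?thesis using Phi_Cfun v by simp
qed

lemma Psi_add: assumes X: "X \<in> K0 Ab" and Y: "Y \<in> K0 Ab"
  shows "Psi (K0_add Ab X Y) = (\<lambda>x. Psi X x + Psi Y x)"
proof -
  obtain n v where v: "v \<in> carrier_vec (n+1)" "X = iota Ab n v" using X K0_iff by blast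
  obtain m w where w: "w \<in> carrier_vec (m+1)" "Y = iota Ab m w" using Y K0_iff by blast
  obtain n' v' where p: "(SOME p. p \<in> X) = (n',v')" by (cases "SOME p. p \<in> X")
  obtain m' w' where q: "(SOME p. p \<in> Y) = (m',w')" by (cases "SOME p. p \<in> Y")
  have pX: "(n',v') \<in> X" using some_iota[OF v(1)] v(2) p by simp
  have qY: "(m',w') \<in> Y" using some_iota[OF w(1)] w(2) q by simp
  have v': "v' \<in> carrier_vec (n'+1)" "PH n' v' = PH n v" using pX iota_eq[OF v(1)] v(2) lim_dom_iff by auto
  have w': "w' \<in> carrier_vec (m'+1)" "PH m' w' = PH m w" using qY iota_eq[OF w(1)] w(2) lim_dom_iff by auto
  let ?k = "max n' m'"
  let ?a = "phi_to Ab n' ?k v'"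
  let ?b = "phi_to Ab m' ?k w'"
  have a: "?a \<in> carrier_vec (?k+1)" "PH ?k ?a = PH n' v'" using phi_to_prop[OF v'(1)] by auto
  have b: "?b \<in> carrier_vec (?k+1)" "PH ?k ?b = PH m' w'" using phi_to_prop[OF w'(1)] by auto
  have "K0_add Ab X Y = iota Ab ?k (?a + ?b)" unfolding K0_add_def Let_def p q by simp
  then have "Psi (K0_add Ab X Y) = PH ?k (?a + ?b)" using Psi_iota[of "?a + ?b" ?k] a(1) b(1) by simp
  also have "\<dots> = (\<lambda>x. PH ?k ?a x + PH ?k ?b x)" by (rule Phi_add[OF a(1) b(1)])
  also have "\<dots> = (\<lambda>x. Psi X x + Psi Y x)" using a b v' w' Psi_iota[OF v(1)] Psi_iota[OF w(1)] v(2) w(2) by simp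
  finally show ?thesis .
qed

lemma Psi_inj: "inj_on Psi (K0 Ab)"
proof (rule inj_onI)
  fix X Y assume X: "X \<in> K0 Ab" and Y: "Y \<in> K0 Ab" and eq: "Psi X = Psi Y"
  obtain n v where v: "v \<in> carrier_vec (n+1)" "X = iota Ab n v" using X K0_iff by blast
  obtain m w where w: "w \<in> carrier_vec (m+1)" "Y = iota Ab m w" using Y K0_iff by blast
  have "PH n v = PH m w" using eq Psi_iota[OF v(1)] Psi_iota[OF w(1)] v(2) w(2) by simp
  then show "X = Y" using iota_eq[OF v(1)] iota_eq[OF w(1)] v(2) w(2) by simp
qed

lemma Psi_unit: "Psi (K0_unit Ab) = indicator (Xmin E)"
proof -
  have v: "vec 1 (\<lambda>_. 1) \<in> carrier_vec (0+1)" by simp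
  have B: "Bset E (rr E 0) 0 = Xmin E" unfolding rr_def Bset_def Xmin_def by auto
  have "PH 0 (vec 1 (\<lambda>_. 1)) = indicator (Xmin E)"
    unfolding Phi_def Rmap_def Amat_0 by (rule ext) (simp add: B)
  then show ?thesis unfolding K0_unit_def using Psi_iota[OF v] by simp
qed

end


theorem mainTheorem9:
  fixes Ab :: "nat \<Rightarrow> int mat" and E :: "nat \<Rightarrow> nat \<Rightarrow> nat \<Rightarrow> bool" and c :: "nat \<Rightarrow> int vec"
  assumes dims: "\<forall>n. Ab n \<in> carrier_mat (n+2) (n+1)"
    and nonneg: "\<forall>n i j. i < n+2 \<longrightarrow> j < n+1 \<longrightarrow> 0 \<le> Ab n $$ (i,j)"
    and rank: "\<forall>n. vec_space.rank (n+2) (map_mat (of_int :: int \<Rightarrow> rat) (Ab n)) = n+1"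
    and red: "min_reduction Ab E"
    and cdim: "\<forall>n. c n \<in> carrier_vec (n+2)"
    and cinv: "\<forall>n. det (Acomb Ab c n) \<noteq> 0"
  shows "(\<forall>n\<ge>1. Phi Ab c E n ` carrier_vec (n+1) \<subseteq> Cfun E (Gset Ab c)
            \<and> inj_on (Phi Ab c E n) (carrier_vec (n+1))
            \<and> (\<forall>v\<in>carrier_vec (n+1). Phi Ab c E (n+1) (Ab n *\<^sub>v v) = Phi Ab c E n v))
       \<and> (\<exists>\<Psi>. \<Psi> ` K0 Ab \<subseteq> Cfun E (Gset Ab c)
            \<and> (\<forall>X\<in>K0 Ab. \<forall>Y\<in>K0 Ab. \<Psi> (K0_add Ab X Y) = (\<lambda>x. \<Psi> X x + \<Psi> Y x))
            \<and> inj_on \<Psi> (K0 Ab)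
            \<and> (\<forall>n\<ge>1. \<forall>v\<in>carrier_vec (n+1). \<Psi> (iota Ab n v) = Phi Ab c E n v)
            \<and> \<Psi> (K0_unit Ab) = indicator (Xmin E))"
proof -
  interpret T: thm9 Ab E c using dims red cdim cinv by unfold_locales
  have P1: "\<forall>n\<ge>1. Phi Ab c E n ` carrier_vec (n+1) \<subseteq> Cfun E (Gset Ab c)
            \<and> inj_on (Phi Ab c E n) (carrier_vec (n+1))
            \<and> (\<forall>v\<in>carrier_vec (n+1). Phi Ab c E (n+1) (Ab n *\<^sub>v v) = Phi Ab c E n v)"
  proof (intro allI impI conjI)
    fix n :: nat assume n: "n \<ge> 1"
    show "Phi Ab c E n ` carrier_vec (n+1) \<subseteq> Cfun E (Gset Ab c)" using T.Phi_Cfun n by auto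
    show "inj_on (Phi Ab c E n) (carrier_vec (n+1))" using T.Phi_inj by (auto intro: inj_onI)
    show "\<forall>v\<in>carrier_vec (n+1). Phi Ab c E (n+1) (Ab n *\<^sub>v v) = Phi Ab c E n v" using T.Phi_compat by auto
  qed
  have P2: "\<exists>\<Psi>. \<Psi> ` K0 Ab \<subseteq> Cfun E (Gset Ab c)
            \<and> (\<forall>X\<in>K0 Ab. \<forall>Y\<in>K0 Ab. \<Psi> (K0_add Ab X Y) = (\<lambda>x. \<Psi> X x + \<Psi> Y x))
            \<and> inj_on \<Psi> (K0 Ab)
            \<and> (\<forall>n\<ge>1. \<forall>v\<in>carrier_vec (n+1). \<Psi> (iota Ab n v) = Phi Ab c E n v)
            \<and> \<Psi> (K0_unit Ab) = indicator (Xmin E)"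
  proof (intro exI[of _ T.Psi] conjI)
    show "T.Psi ` K0 Ab \<subseteq> Cfun E (Gset Ab c)"
    proof (rule image_subsetI)
      fix X assume "X \<in> K0 Ab"
      then obtain n v where v: "v \<in> carrier_vec (n+1)" "X = iota Ab n v" using T.K0_iff by blast
      then show "T.Psi X \<in> Cfun E (Gset Ab c)" using T.Psi_iota[OF v(1)] T.PH_Cfun0[OF v(1)] by simp
    qed
    show "\<forall>X\<in>K0 Ab. \<forall>Y\<in>K0 Ab. T.Psi (K0_add Ab X Y) = (\<lambda>x. T.Psi X x + T.Psi Y x)"
      using T.Psi_add by auto
    show "inj_on T.Psi (K0 Ab)" by (rule T.Psi_inj)
    show "\<forall>n\<ge>1. \<forall>v\<in>carrier_vec (n+1). T.Psi (iota Ab n v) = Phi Ab c E n v"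
      using T.Psi_iota by auto
    show "T.Psi (K0_unit Ab) = indicator (Xmin E)" by (rule T.Psi_unit)
  qed
  show ?thesis using P1 P2 by blast
qed

end
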